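(* Let $G$ be a connected graph and let $P$ and $Q$ be two distinct pendent paths in $G$ with origins $u$ and $v$, respectively (possibly $u=v$). Let $x$ be the neighbor of $u$ lying on $P$, and let $y$ be the pendent (degree-one) end vertex of $Q$. Let $G' = G - ux + xy$ (delete the edge $ux$ and add the edge $xy$). Then $SO(G) > SO(G')$.
   Context: For a graph $G$, $d_G(w)$ denotes the degree of vertex $w$, and the Sombor index is $SO(G)=\sum_{ab\in E(G)}\sqrt{d_G(a)^2+d_G(b)^2}$. A pendent path in $G$ is a path $P=u u_1 u_2\cdots u_k$ ($k\ge 1$) in $G$ such that $d_G(u)\ge 3$, $d_G(u_k)=1$ and $d_G(u_i)=2$ for $i=1,\dots,k-1$; the vertex $u$ is its origin and $k$ its length. For an edge $e$, $G-e$ denotes deletion of $e$; for nonadjacent vertices $a,b$, $G+ab$ denotes adding the edge $ab$. *)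

theory Defs
  imports Complex_Main
begin

definition simple_graph :: "'a set \<Rightarrow> 'a set set \<Rightarrow> bool" where
  "simple_graph V E \<longleftrightarrow> finite V \<and>
     (\<forall>e\<in>E. \<exists>a b. a \<noteq> b \<and> e = {a, b} \<and> a \<in> V \<and> b \<in> V)"

definition adj_rel :: "'a set set \<Rightarrow> ('a \<times> 'a) set" where
  "adj_rel E = {(a, b). {a, b} \<in> E}"

definition connected_graph :: "'a set \<Rightarrow> 'a set set \<Rightarrow> bool" where
  "connected_graph V E \<longleftrightarrow> (\<forall>a\<in>V. \<forall>b\<in>V. (a, b) \<in> (adj_rel E)\<^sup>*)"

definition deg :: "'a set set \<Rightarrow> 'a \<Rightarrow> nat" where
  "deg E w = card {e \<in> E. w \<in> e}"

definition sombor :: "'a set set \<Rightarrow> real" where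
  "sombor E = (\<Sum>e\<in>E. sqrt (\<Sum>w\<in>e. (real (deg E w))\<^sup>2))"

text \<open>A pendent path u u_1 ... u_k (k >= 1), given as the vertex list [u, u_1, ..., u_k].\<close>
definition pendent_path :: "'a set set \<Rightarrow> 'a list \<Rightarrow> bool" where
  "pendent_path E p \<longleftrightarrow> length p \<ge> 2 \<and> distinct p \<and>
     (\<forall>i < length p - 1. {p ! i, p ! (i + 1)} \<in> E) \<and>
     deg E (hd p) \<ge> 3 \<and> deg E (last p) = 1 \<and>
     (\<forall>i. 0 < i \<and> i < length p - 1 \<longrightarrow> deg E (p ! i) = 2)"

end

theory Submission
  imports Defs
begin

lemma L1: fixes t :: real assumes "t \<ge> 4" shows "sqrt (t+4) \<le> sqrt (t+1) + 0.6"
proof -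
  have "sqrt 5 \<le> sqrt (t+1)" using assms by simp
  moreover have "2.2 \<le> sqrt (5::real)" by (rule real_le_rsqrt) (simp add: power2_eq_square)
  ultimately have s: "2.2 \<le> sqrt (t+1)" by linarith
  have "(sqrt (t+1) + 0.6)^2 = t + 1 + 1.2 * sqrt (t+1) + 0.36"
    using assms by (simp add: power2_eq_square algebra_simps)
  also have "\<dots> \<ge> t + 4" using s by (simp add: power2_eq_square)
  finally have "t + 4 \<le> (sqrt (t+1) + 0.6)^2" .
  then show ?thesis using s by (simp add: real_sqrt_le_iff real_le_lsqrt)
qed

lemma L2: fixes c :: real assumes "c \<ge> 0" "c \<le> 4" shows "sqrt (c+4) + 0.6 < sqrt (c+9)"
proof -
  have "sqrt (c+4) \<le> sqrt 8" using assms by simp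
  moreover have "sqrt (8::real) \<le> 2.83" by (rule real_le_lsqrt) (simp_all add: power2_eq_square)
  ultimately have s: "sqrt (c+4) \<le> 2.83" by linarith
  have "(sqrt (c+4) + 0.6)^2 = c + 4 + 1.2 * sqrt (c+4) + 0.36"
    using assms by (simp add: power2_eq_square algebra_simps)
  also have "\<dots> < c + 9" using s by (simp add: power2_eq_square)
  finally show ?thesis by (rule real_less_rsqrt)
qed

lemma deg1_unique:
  assumes "deg E y = 1" "e1 \<in> E" "y \<in> e1" "e2 \<in> E" "y \<in> e2" shows "e1 = e2"
proof -
  have "card {e\<in>E. y\<in>e} = 1" using assms(1) unfolding deg_def .
  then obtain a where S: "{e\<in>E. y\<in>e} = {a}" by (rule card_1_singletonE)
  have "e1 \<in> {e\<in>E. y\<in>e}" "e2 \<in> {e\<in>E. y\<in>e}" using assms by simp_all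
  then show ?thesis unfolding S by simp
qed

lemma deg2_unique:
  assumes "deg E z = 2" "e1 \<in> E" "z \<in> e1" "e2 \<in> E" "z \<in> e2" "e1 \<noteq> e2" "e3 \<in> E" "z \<in> e3"
  shows "e3 = e1 \<or> e3 = e2"
proof -
  have "card {e\<in>E. z\<in>e} = 2" using assms(1) unfolding deg_def .
  then obtain a b where S: "{e\<in>E. z\<in>e} = {a,b}" unfolding card_2_iff by blast
  have "e1 \<in> {e\<in>E. z\<in>e}" "e2 \<in> {e\<in>E. z\<in>e}" "e3 \<in> {e\<in>E. z\<in>e}" using assms by simp_all
  then have "e1 \<in> {a,b}" "e2 \<in> {a,b}" "e3 \<in> {a,b}" unfolding S .
  then show ?thesis using assms(6) by auto
qed

lemma pp_facts:
  assumes "pendent_path E p"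
  shows "length p \<ge> 2" "distinct p" "\<And>i. i < length p - 1 \<Longrightarrow> {p ! i, p ! (i + 1)} \<in> E"
    "deg E (p!0) \<ge> 3" "deg E (p!(length p - 1)) = 1"
    "\<And>i. 0 < i \<Longrightarrow> i < length p - 1 \<Longrightarrow> deg E (p ! i) = 2"
proof -
  note D = assms[unfolded pendent_path_def]
  have A: "length p \<ge> 2" using D by (elim conjE)
  have ne: "p \<noteq> []" using A by auto
  show "length p \<ge> 2" by (rule A)
  show "distinct p" using D by (elim conjE)
  show "\<And>i. i < length p - 1 \<Longrightarrow> {p ! i, p ! (i + 1)} \<in> E"
  proof -
    fix i assume "i < length p - 1"
    moreover have "\<forall>i < length p - 1. {p ! i, p ! (i + 1)} \<in> E" using D by (elim conjE)
    ultimately show "{p ! i, p ! (i + 1)} \<in> E" by (elim allE[of _ i]) (erule mp)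
  qed
  show "\<And>i. 0 < i \<Longrightarrow> i < length p - 1 \<Longrightarrow> deg E (p ! i) = 2"
  proof -
    fix i assume "0 < i" "i < length p - 1"
    moreover have "\<forall>i. 0 < i \<and> i < length p - 1 \<longrightarrow> deg E (p ! i) = 2" using D by (elim conjE)
    ultimately show "deg E (p ! i) = 2" by (elim allE[of _ i]) (erule mp, rule conjI)
  qed
  have "deg E (hd p) \<ge> 3" using D by (elim conjE)
  then show "deg E (p!0) \<ge> 3" using ne by (simp add: hd_conv_nth)
  have "deg E (last p) = 1" using D by (elim conjE)
  then show "deg E (p!(length p - 1)) = 1" using ne by (simp add: last_conv_nth)
qed

lemma dnth: "distinct xs \<Longrightarrow> i < length xs \<Longrightarrow> j < length xs \<Longrightarrow> i \<noteq> j \<Longrightarrow> xs!i \<noteq> xs!j"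
  by (simp add: nth_eq_iff_index_eq)

theorem lemma2p1:
  fixes V :: "'a set" and E :: "'a set set" and P Q :: "'a list"
  assumes "simple_graph V E"
    and "connected_graph V E"
    and "pendent_path E P"
    and "pendent_path E Q"
    and "P \<noteq> Q"
  shows "sombor (E - {{hd P, P ! 1}} \<union> {{P ! 1, last Q}}) < sombor E"
proof -
  have finE: "finite E"
  proof (rule finite_subset)
    have sg: "\<forall>e\<in>E. \<exists>a b. a \<noteq> b \<and> e = {a,b} \<and> a \<in> V \<and> b \<in> V"
      using assms(1) unfolding simple_graph_def by simp
    show "E \<subseteq> Pow V"
    proof
      fix e assume "e \<in> E"
      with sg obtain a b where "e = {a,b}" "a \<in> V" "b \<in> V" by blast
      thus "e \<in> Pow V" by simp
    qed
    show "finite (Pow V)" using assms(1) unfolding simple_graph_def by simp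
  qed
  note PF = pp_facts[OF assms(3)]
  note QF = pp_facts[OF assms(4)]
  define m where "m = length P"
  define n where "n = length Q"
  define u where "u = P!0"
  define x where "x = P!1"
  define y where "y = Q!(n-1)"
  define w where "w = Q!(n-2)"
  have m2: "m \<ge> 2" using PF(1) m_def by simp
  have n2: "n \<ge> 2" using QF(1) n_def by simp
  have hdP: "hd P = u" using m2 unfolding u_def m_def by (cases P) auto
  have lastQ: "last Q = y" proof -
    have "Q \<noteq> []" using n2 n_def by auto
    thus ?thesis unfolding y_def n_def by (simp add: last_conv_nth)
  qed
  have uxE: "{u,x} \<in> E" using PF(3)[of 0] m2 unfolding u_def x_def m_def by simp
  have ux: "u \<noteq> x" using PF(2) m2 unfolding u_def x_def m_def by (intro dnth) auto
  have du: "deg E u \<ge> 3" using PF(4) u_def by simp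
  have dx1: "m = 2 \<Longrightarrow> deg E x = 1" using PF(5) unfolding x_def m_def by simp
  have dx2: "m > 2 \<Longrightarrow> deg E x = 2" using PF(6)[of 1] unfolding x_def m_def by simp
  have dx: "deg E x \<le> 2" using dx1 dx2 m2 by linarith
  have wyE: "{w,y} \<in> E" using QF(3)[of "n-2"] n2 unfolding w_def y_def n_def
    by (simp add: Suc_diff_Suc numeral_2_eq_2)
  have wy: "w \<noteq> y" using QF(2) n2 unfolding w_def y_def n_def by (intro dnth) auto
  have dy: "deg E y = 1" using QF(5) y_def n_def by simp
  have dw3: "n = 2 \<Longrightarrow> deg E w \<ge> 3" using QF(4) unfolding w_def by simp
  have dw2: "n > 2 \<Longrightarrow> deg E w = 2" using QF(6)[of "n-2"] unfolding w_def n_def by simp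
  have dw: "deg E w \<ge> 2" using dw2 dw3 n2 by (cases "n = 2") auto
  have yedge: "\<And>e. e \<in> E \<Longrightarrow> y \<in> e \<Longrightarrow> e = {w,y}"
    using deg1_unique[OF dy] wyE by blast
  have yu: "y \<noteq> u" using dy du by auto
  have xy: "x \<noteq> y"
  proof
    assume xy: "x = y"
    have m2': "m = 2" using dx2 dy xy m2 by (cases "m = 2") auto
    have "{u,x} = {w,y}" using yedge uxE xy by blast
    hence uw: "u = w" using xy ux wy by (auto simp: doubleton_eq_iff)
    have n2': "n = 2" using dw2 du uw n2 by (cases "n = 2") auto
    have "P = Q"
    proof (rule nth_equalityI)
      show "length P = length Q" using m2' n2' m_def n_def by simp
      fix i assume "i < length P"
      hence "i = 0 \<or> i = 1" using m2' m_def by auto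
      then show "P!i = Q!i" using uw xy n2' unfolding u_def x_def w_def y_def by auto
    qed
    then show False using assms(5) by simp
  qed
  have xw: "x \<noteq> w"
  proof
    assume xw: "x = w"
    have n3: "n > 2" using dw3 dx xw n2 by (cases "n = 2") auto
    have dx2': "deg E x = 2" using dw2[OF n3] xw by simp
    have m3: "m > 2" using dx1 dx2' m2 by (cases "m = 2") auto
    define z where "z = P!2"
    have xzE: "{x,z} \<in> E" using PF(3)[of 1] m3 unfolding x_def z_def m_def by (simp add: numeral_2_eq_2)
    have uz: "u \<noteq> z" using PF(2) m3 unfolding u_def z_def m_def by (intro dnth) auto
    have xyE0: "{x,y} \<in> E" using wyE xw by simp
    have "{x,y} = {u,x} \<or> {x,y} = {x,z}"
      by (rule deg2_unique[OF dx2' uxE _ xzE _ _ xyE0]) (use uz ux in \<open>auto simp: doubleton_eq_iff\<close>)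
    hence yz: "y = z" using yu xy by (auto simp: doubleton_eq_iff)
    have m3': "m = 3"
    proof (rule ccontr)
      assume "m \<noteq> 3"
      hence "deg E z = 2" using PF(6)[of 2] m3 unfolding z_def m_def by simp
      thus False using dy yz by simp
    qed
    define t where "t = Q!(n-3)"
    have twE: "{t,w} \<in> E" using QF(3)[of "n-3"] n3 unfolding t_def w_def n_def
      by (simp add: numeral_3_eq_3 numeral_2_eq_2 Suc_diff_Suc)
    have ty: "t \<noteq> y" using QF(2) n3 unfolding t_def y_def n_def by (intro dnth) auto
    have "t \<noteq> w" using QF(2) n3 unfolding t_def w_def n_def by (intro dnth) auto
    hence tx: "t \<noteq> x" using xw by simp
    have "{t,x} = {u,x} \<or> {t,x} = {x,z}"
      using deg2_unique[OF dx2' uxE _ xzE, of "{t,x}"] twE xw uz by (auto simp: doubleton_eq_iff)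
    hence tu: "t = u" using tx ty yz by (auto simp: doubleton_eq_iff)
    have n3': "n = 3"
    proof (rule ccontr)
      assume "n \<noteq> 3"
      hence "deg E t = 2" using QF(6)[of "n-3"] n3 unfolding t_def n_def by simp
      thus False using du tu by simp
    qed
    have "P = Q"
    proof (rule nth_equalityI)
      show "length P = length Q" using m3' n3' m_def n_def by simp
      fix i assume "i < length P"
      hence "i = 0 \<or> i = 1 \<or> i = 2" using m3' m_def by auto
      then show "P!i = Q!i" using tu xw yz n3' unfolding u_def x_def w_def y_def t_def z_def by auto
    qed
    then show False using assms(5) by simp
  qed
  have xyE: "{x,y} \<notin> E"
  proof
    assume "{x,y} \<in> E"
    hence "{x,y} = {w,y}" using yedge by blast
    thus False using xw xy by (auto simp: doubleton_eq_iff)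
  qed
  define E' where "E' = E - {{u,x}} \<union> {{x,y}}"
  have finE': "finite E'" using finE E'_def by simp
  have dle: "deg E' z \<le> deg E z" if "z \<noteq> y" for z
  proof (cases "z = x")
    case True
    have fA: "finite {e\<in>E. x\<in>e}" using finE by simp
    have eq: "{e\<in>E'. z\<in>e} = insert {x,y} ({e\<in>E. x\<in>e} - {{u,x}})"
      using True unfolding E'_def by auto
    have "card {e\<in>E'. z\<in>e} \<le> Suc (card ({e\<in>E. x\<in>e} - {{u,x}}))"
      unfolding eq by (rule card_insert_le_m1) (simp_all)
    also have "\<dots> = card {e\<in>E. x\<in>e}"
    proof -
      have mem: "{u,x} \<in> {e\<in>E. x\<in>e}" using uxE by simp
      hence "card {e\<in>E. x\<in>e} > 0" using fA card_gt_0_iff by blast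
      moreover have "card ({e\<in>E. x\<in>e} - {{u,x}}) = card {e\<in>E. x\<in>e} - 1"
        using card_Diff_singleton[OF mem] .
      ultimately show ?thesis by simp
    qed
    finally show ?thesis using True unfolding deg_def by simp
  next
    case False
    have "{e\<in>E'. z\<in>e} \<subseteq> {e\<in>E. z\<in>e}" using False that unfolding E'_def by auto
    then show ?thesis unfolding deg_def by (rule card_mono[rotated]) (simp add: finE)
  qed
  have dy': "deg E' y \<le> 2"
  proof -
    have "{e\<in>E'. y\<in>e} \<subseteq> {{w,y},{x,y}}" using yedge unfolding E'_def by auto
    hence "card {e\<in>E'. y\<in>e} \<le> card {{w,y},{x,y}}" by (rule card_mono[rotated]) simp
    also have "\<dots> \<le> 2" by (simp add: card_insert_if)
    finally show ?thesis unfolding deg_def .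
  qed
  define f where "f = (\<lambda>e. sqrt (\<Sum>v\<in>e. (real (deg E v))\<^sup>2))"
  define g where "g = (\<lambda>e. sqrt (\<Sum>v\<in>e. (real (deg E' v))\<^sup>2))"
  have SE: "sombor E = f {u,x} + sum f (E - {{u,x}})"
    unfolding sombor_def f_def using finE uxE by (simp add: sum.remove)
  have SE': "sombor E' = g {x,y} + sum g (E - {{u,x}})"
    unfolding sombor_def g_def E'_def using finE xyE by simp
  have wyin: "{w,y} \<in> E - {{u,x}}" using wyE yu xy by (auto simp: doubleton_eq_iff)
  have S1: "sum f (E - {{u,x}}) = f {w,y} + sum f (E - {{u,x}} - {{w,y}})"
    using finE wyin by (simp add: sum.remove)
  have S2: "sum g (E - {{u,x}}) = g {w,y} + sum g (E - {{u,x}} - {{w,y}})"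
    using finE wyin by (simp add: sum.remove)
  have S3: "sum g (E - {{u,x}} - {{w,y}}) \<le> sum f (E - {{u,x}} - {{w,y}})"
  proof (rule sum_mono)
    fix e assume e: "e \<in> E - {{u,x}} - {{w,y}}"
    hence ye: "y \<notin> e" using yedge by blast
    have "(\<Sum>v\<in>e. (real (deg E' v))\<^sup>2) \<le> (\<Sum>v\<in>e. (real (deg E v))\<^sup>2)"
    proof (rule sum_mono)
      fix v assume "v \<in> e"
      hence "v \<noteq> y" using ye by blast
      hence "deg E' v \<le> deg E v" by (rule dle)
      thus "(real (deg E' v))\<^sup>2 \<le> (real (deg E v))\<^sup>2" by (intro power_mono) auto
    qed
    then show "g e \<le> f e" unfolding f_def g_def by simp
  qed
  have gwy: "g {w,y} \<le> sqrt ((real (deg E w))\<^sup>2 + 4)"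
  proof -
    have "(real (deg E' w))\<^sup>2 + (real (deg E' y))\<^sup>2 \<le> (real (deg E w))\<^sup>2 + 2\<^sup>2"
      using dle[of w] wy dy' by (intro add_mono power_mono) auto
    thus ?thesis unfolding g_def using wy by simp
  qed
  have fwy: "f {w,y} = sqrt ((real (deg E w))\<^sup>2 + 1)" unfolding f_def using wy dy by simp
  have K1: "g {w,y} \<le> f {w,y} + 0.6"
  proof -
    have "(real (deg E w))\<^sup>2 \<ge> 2\<^sup>2" using dw by (intro power_mono) auto
    then have "sqrt ((real (deg E w))\<^sup>2 + 4) \<le> sqrt ((real (deg E w))\<^sup>2 + 1) + 0.6"
      using L1 by simp
    then show ?thesis using gwy fwy by linarith
  qed
  have gxy: "g {x,y} \<le> sqrt ((real (deg E x))\<^sup>2 + 4)"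
  proof -
    have "(real (deg E' x))\<^sup>2 + (real (deg E' y))\<^sup>2 \<le> (real (deg E x))\<^sup>2 + 2\<^sup>2"
      using dle[of x] xy dy' by (intro add_mono power_mono) auto
    thus ?thesis unfolding g_def using xy by simp
  qed
  have fux: "f {u,x} \<ge> sqrt ((real (deg E x))\<^sup>2 + 9)"
  proof -
    have "(real (deg E u))\<^sup>2 \<ge> 3\<^sup>2" using du by (intro power_mono) auto
    thus ?thesis unfolding f_def using ux by simp
  qed
  have K2: "g {x,y} + 0.6 < f {u,x}"
  proof -
    have "(real (deg E x))\<^sup>2 \<le> 2\<^sup>2" using dx by (intro power_mono) auto
    then have "sqrt ((real (deg E x))\<^sup>2 + 4) + 0.6 < sqrt ((real (deg E x))\<^sup>2 + 9)"
      using L2 by simp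
    then show ?thesis using gxy fux by linarith
  qed
  have "sombor E' < sombor E" using SE SE' S1 S2 S3 K1 K2 by linarith
  then show ?thesis unfolding E'_def using hdP lastQ x_def by simp
qed

end
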